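(* Let $H^2\times H^2$ carry the product metric $\rho(\mathsf z,\mathsf w)=\sqrt{d_H(z_1,w_1)^2+d_H(z_2,w_2)^2}$ and for $\mathsf z,\mathsf w$ let $E(\mathsf z,\mathsf w)=\{\mathsf x:\rho(\mathsf x,\mathsf z)=\rho(\mathsf x,\mathsf w)\}$. Let $\gamma=(g_1,g_2)$, acting by $(z_1,z_2)\mapsto(g_1(z_1),g_2(z_2))$, where $g_1,g_2\in\mathrm{PSL}(2,\mathbb R)$ are both hyperbolic isometries of $H^2$. Let $\mathsf z=(z_1,z_2)$ where $z_i$ lies on the invariant axis of $g_i$ for $i=1,2$. Then $E(\mathsf z,\gamma(\mathsf z))$ and $E(\mathsf z,\gamma^{-1}(\mathsf z))$ are disjoint. In particular, the Dirichlet domain for the cyclic group $\langle\gamma\rangle$ with basepoint $\mathsf z$ is two-faced, i.e. it equals the intersection of the two closed half-spaces containing $\mathsf z$ bounded by $E(\mathsf z,\gamma(\mathsf z))$ and $E(\mathsf z,\gamma^{-1}(\mathsf z))$.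
   Context: A hyperbolic isometry of $H^2$ fixes exactly two ideal boundary points; its invariant axis is the geodesic joining them. The Dirichlet domain for a group $G$ of isometries with basepoint $p$ is $\{q:\rho(p,q)\le\rho(p,g(q))\text{ for all } g\in G\setminus\{\mathrm{id}\}\}$, i.e. the intersection over $g\neq \mathrm{id}$ of the closed half-spaces containing $p$ bounded by $E(p,g(p))$. *)

theory Defs
  imports "HOL-Analysis.Analysis"
begin

definition H2 :: "complex set" where
  "H2 = {z. Im z > 0}"

definition dH :: "complex \<Rightarrow> complex \<Rightarrow> real" where
  "dH z w = arcosh (1 + (cmod (z - w))\<^sup>2 / (2 * Im z * Im w))"

section \<open>PSL(2,R) via representative matrices (a,b,c,d), ad - bc = 1\<close>

type_synonym mat2 = "real \<times> real \<times> real \<times> real"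

definition sl2 :: "mat2 \<Rightarrow> bool" where
  "sl2 M = (case M of (a,b,c,d) \<Rightarrow> a*d - b*c = 1)"

definition mob :: "mat2 \<Rightarrow> complex \<Rightarrow> complex" where
  "mob M z = (case M of (a,b,c,d) \<Rightarrow>
      (of_real a * z + of_real b) / (of_real c * z + of_real d))"

definition mat_mult :: "mat2 \<Rightarrow> mat2 \<Rightarrow> mat2" where
  "mat_mult M N = (case M of (a,b,c,d) \<Rightarrow> case N of (e,f,g,h) \<Rightarrow>
      (a*e + b*g, a*f + b*h, c*e + d*g, c*f + d*h))"

definition mat_id :: mat2 where "mat_id = (1,0,0,1)"

definition mat_inv :: "mat2 \<Rightarrow> mat2" where
  "mat_inv M = (case M of (a,b,c,d) \<Rightarrow> (d, -b, -c, a))"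

definition mat_zpow :: "mat2 \<Rightarrow> int \<Rightarrow> mat2" where
  "mat_zpow M n = (if n \<ge> 0 then (mat_mult M ^^ nat n) mat_id
                   else (mat_mult (mat_inv M) ^^ nat (- n)) mat_id)"

definition hyperbolic :: "mat2 \<Rightarrow> bool" where
  "hyperbolic M = (case M of (a,b,c,d) \<Rightarrow> \<bar>a + d\<bar> > 2)"

text \<open>Ideal boundary points: R \<union> {\<infinity>}, with None standing for \<infinity>.\<close>
definition ideal_fixed :: "mat2 \<Rightarrow> real option set" where
  "ideal_fixed M = (case M of (a,b,c,d) \<Rightarrow>
      {Some x | x. c * x\<^sup>2 + (d - a) * x - b = 0 \<and> c * x + d \<noteq> 0}
      \<union> (if c = 0 then {None} else {}))"

definition geodesic_between :: "real option \<Rightarrow> real option \<Rightarrow> complex set" where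
  "geodesic_between p q = {z \<in> H2.
     (case (p, q) of
        (Some x, Some y) \<Rightarrow> cmod (z - of_real ((x + y) / 2)) = \<bar>x - y\<bar> / 2
      | (Some x, None) \<Rightarrow> Re z = x
      | (None, Some y) \<Rightarrow> Re z = y
      | (None, None) \<Rightarrow> False)}"

definition invariant_axis :: "mat2 \<Rightarrow> complex set" where
  "invariant_axis M = \<Union>{geodesic_between p q | p q.
       p \<in> ideal_fixed M \<and> q \<in> ideal_fixed M \<and> p \<noteq> q}"

definition H2H2 :: "(complex \<times> complex) set" where
  "H2H2 = H2 \<times> H2"

definition rho :: "complex \<times> complex \<Rightarrow> complex \<times> complex \<Rightarrow> real" where
  "rho z w = sqrt ((dH (fst z) (fst w))\<^sup>2 + (dH (snd z) (snd w))\<^sup>2)"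

definition bisector :: "complex \<times> complex \<Rightarrow> complex \<times> complex \<Rightarrow> (complex \<times> complex) set" where
  "bisector z w = {x \<in> H2H2. rho x z = rho x w}"

definition halfspace :: "complex \<times> complex \<Rightarrow> complex \<times> complex \<Rightarrow> (complex \<times> complex) set" where
  "halfspace z w = {x \<in> H2H2. rho x z \<le> rho x w}"

definition pact :: "mat2 \<times> mat2 \<Rightarrow> complex \<times> complex \<Rightarrow> complex \<times> complex" where
  "pact g x = (mob (fst g) (fst x), mob (snd g) (snd x))"

definition pinv :: "mat2 \<times> mat2 \<Rightarrow> mat2 \<times> mat2" where
  "pinv g = (mat_inv (fst g), mat_inv (snd g))"

definition cyclic_group :: "mat2 \<times> mat2 \<Rightarrow> (complex \<times> complex \<Rightarrow> complex \<times> complex) set" where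
  "cyclic_group g = {pact (mat_zpow (fst g) n, mat_zpow (snd g) n) | n. True}"

definition dirichlet :: "(complex \<times> complex \<Rightarrow> complex \<times> complex) set \<Rightarrow> complex \<times> complex
                          \<Rightarrow> (complex \<times> complex) set" where
  "dirichlet G p = {q \<in> H2H2. \<forall>h \<in> G. (\<exists>x \<in> H2H2. h x \<noteq> x) \<longrightarrow> rho p q \<le> rho p (h q)}"

end

theory Submission
  imports Defs
begin


lemma sinh_le_xcosh: "(x::real) \<ge> 0 \<Longrightarrow> sinh x \<le> x * cosh x"
proof -
  assume x: "x \<ge> 0"
  have "(\<lambda>t. t * cosh t - sinh t) 0 \<le> (\<lambda>t. t * cosh t - sinh t) x"
  proof (rule DERIV_nonneg_imp_nondecreasing[OF x])
    fix t :: real assume t: "0 \<le> t" "t \<le> x"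
    have "((\<lambda>t. t * cosh t - sinh t) has_real_derivative (t * sinh t)) (at t)"
      by (auto intro!: derivative_eq_intros)
    moreover have "t * sinh t \<ge> 0" using t by simp
    ultimately show "\<exists>y. ((\<lambda>t. t * cosh t - sinh t) has_real_derivative y) (at t) \<and> 0 \<le> y" by blast
  qed
  thus ?thesis by simp
qed

lemma psi_deriv1:
  fixes k t :: real assumes k: "k > 1"
  shows "((\<lambda>t. (arcosh (k * cosh t))\<^sup>2 - t\<^sup>2) has_real_derivative
     2 * (arcosh (k * cosh t) * (k * sinh t) / sqrt ((k * cosh t)\<^sup>2 - 1) - t)) (at t)"
proof -
  have C: "k * cosh t > 1" using k cosh_real_ge_1[of t]
    by (metis less_le_trans mult_less_cancel_left1 mult_less_cancel_right1 zero_less_one cosh_real_pos less_imp_le not_less)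
  have P: "((\<lambda>t. arcosh (k * cosh t)) has_real_derivative
      (1 / sqrt ((k * cosh t)\<^sup>2 - 1)) * (k * sinh t)) (at t)"
    by (rule DERIV_chain2[where f=arcosh and g="\<lambda>t. k * cosh t"])
       (auto intro!: derivative_eq_intros arcosh_real_has_field_derivative C)
  show ?thesis
    by (auto intro!: derivative_eq_intros P simp: algebra_simps)
qed

lemma alg1:
  fixes S A k s c :: real
  assumes Sp: "S > 0" and sh: "s^2 = c^2 - 1" and S2: "S^2 = (k * c)^2 - 1"
  shows "((1 / S * (k * s) * (k * s) + k * c * A) * S
        - A * (k * s) * (inverse S / 2 * (2 * (k * c) * (k * s)))) / (S * S) - 1
        = (k\<^sup>2 - 1) * (A * (k * c) - S) / S ^ 3"
proof -
  have "((1 / S * (k * s) * (k * s) + k * c * A) * S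
        - A * (k * s) * (inverse S / 2 * (2 * (k * c) * (k * s)))) / (S * S) - 1
     = ((k * s)^2 * S + k * c * A * S^2 - A * k * c * (k * s)^2 - S^3)/S^3"
    using Sp by (simp add: field_simps power2_eq_square power3_eq_cube)
  also have "(k * s)^2 * S + k * c * A * S^2 - A * k * c * (k * s)^2 - S^3 = (k\<^sup>2 - 1) * (A * (k * c) - S)"
  proof -
    have e1: "(k * s)^2 = k^2 * c^2 - k^2" using sh by (simp add: power_mult_distrib right_diff_distrib)
    have e2: "S^2 = k^2 * c^2 - 1" using S2 by (simp add: power_mult_distrib)
    have e3: "S^3 = S * (k^2 * c^2 - 1)" using e2 by (simp add: power3_eq_cube power2_eq_square)
    show ?thesis unfolding e1 e2 e3 by (simp add: algebra_simps)
  qed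
  finally show ?thesis .
qed
lemma psi_deriv2:
  fixes k t :: real assumes k: "k > 1"
  shows "((\<lambda>t. arcosh (k * cosh t) * (k * sinh t) / sqrt ((k * cosh t)\<^sup>2 - 1) - t) has_real_derivative
     (k\<^sup>2 - 1) * (arcosh (k * cosh t) * (k * cosh t) - sqrt ((k * cosh t)\<^sup>2 - 1)) / sqrt ((k * cosh t)\<^sup>2 - 1) ^ 3) (at t)"
proof -
  have C: "k * cosh t > 1" using k cosh_real_ge_1[of t]
    by (metis less_le_trans mult_less_cancel_right1 cosh_real_pos less_imp_le not_less)
  define S where "S = sqrt ((k * cosh t)\<^sup>2 - 1)"
  have Sp: "S > 0" unfolding S_def using C by simp
  have S2: "S^2 = (k * cosh t)\<^sup>2 - 1" unfolding S_def using C by simp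
  have sh: "(sinh t)^2 = (cosh t)^2 - 1" by (rule sinh_square_eq)
  have P: "((\<lambda>t. arcosh (k * cosh t)) has_real_derivative
      (1 / sqrt ((k * cosh t)\<^sup>2 - 1)) * (k * sinh t)) (at t)"
    by (rule DERIV_chain2[where f=arcosh and g="\<lambda>t. k * cosh t"])
       (auto intro!: derivative_eq_intros arcosh_real_has_field_derivative C)
  have Q: "((\<lambda>t. sqrt ((k * cosh t)\<^sup>2 - 1)) has_real_derivative
      (inverse (sqrt ((k * cosh t)\<^sup>2 - 1)) / 2) * (2 * (k * cosh t) * (k * sinh t))) (at t)"
    by (rule DERIV_chain2[where f=sqrt and g="\<lambda>t. (k * cosh t)\<^sup>2 - 1"])
       (auto intro!: derivative_eq_intros DERIV_real_sqrt simp: C)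
  have Sn: "((\<lambda>t. k * sinh t) has_real_derivative k * cosh t) (at t)"
    by (auto intro!: derivative_eq_intros)
  note R = DERIV_diff[OF DERIV_divide[OF DERIV_mult[OF P Sn] Q] DERIV_ident]
  show ?thesis
    apply (rule DERIV_cong[OF R])
    using Sp apply (simp add: S_def)
    apply (rule alg1)
    using Sp S2 sh apply (simp_all add: S_def)
    done
qed

lemma psi_mid:
  fixes k t L :: real assumes k: "k \<ge> 1"
  shows "(arcosh (k * cosh (t + L)))\<^sup>2 + (arcosh (k * cosh (t - L)))\<^sup>2
     \<ge> 2 * (arcosh (k * cosh t))\<^sup>2 + 2 * L\<^sup>2"
proof (cases "k = 1")
  case True
  have ac: "arcosh (cosh x) ^ 2 = x ^ 2" for x :: real
  proof (cases "x \<ge> 0")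
    case True thus ?thesis by (simp add: arcosh_cosh_real)
  next
    case False
    have "arcosh (cosh x) = arcosh (cosh (-x))" by simp
    also have "\<dots> = -x" using False by (intro arcosh_cosh_real) simp
    finally show ?thesis by simp
  qed
  have "(t + L)\<^sup>2 + (t - L)\<^sup>2 \<ge> 2 * t\<^sup>2 + 2 * L\<^sup>2" by (simp add: power2_eq_square algebra_simps)
  thus ?thesis using True by (simp add: ac)
next
  case False
  hence k1: "k > 1" using k by simp
  define G where "G = (\<lambda>t::real. (arcosh (k * cosh t))\<^sup>2 - t\<^sup>2)"
  define g1 where "g1 = (\<lambda>t::real. arcosh (k * cosh t) * (k * sinh t) / sqrt ((k * cosh t)\<^sup>2 - 1) - t)"
  have mono: "g1 x \<le> g1 y" if "x \<le> y" for x y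
  proof (rule DERIV_nonneg_imp_nondecreasing[OF that])
    fix t assume "x \<le> t" "t \<le> y"
    have C: "k * cosh t > 1" using k1 cosh_real_ge_1[of t]
      by (metis less_le_trans mult_less_cancel_right1 cosh_real_pos less_imp_le not_less)
    define A where "A = arcosh (k * cosh t)"
    have A0: "A \<ge> 0" unfolding A_def using C by simp
    have cA: "cosh A = k * cosh t" unfolding A_def using C by simp
    have sA: "sinh A = sqrt ((k * cosh t)\<^sup>2 - 1)" unfolding A_def using C by (simp add: sinh_arcosh_real)
    have Sp: "sqrt ((k * cosh t)\<^sup>2 - 1) > 0" using C by simp
    have "sqrt ((k * cosh t)\<^sup>2 - 1) \<le> A * (k * cosh t)" using sinh_le_xcosh[OF A0] cA sA by simp
    hence "(k\<^sup>2 - 1) * (arcosh (k * cosh t) * (k * cosh t) - sqrt ((k * cosh t)\<^sup>2 - 1)) / sqrt ((k * cosh t)\<^sup>2 - 1) ^ 3 \<ge> 0"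
      using Sp k1 unfolding A_def by (intro divide_nonneg_pos mult_nonneg_nonneg) auto
    thus "\<exists>y. (g1 has_real_derivative y) (at t) \<and> 0 \<le> y"
      unfolding g1_def using psi_deriv2[OF k1, of t] by blast
  qed
  have conv: "convex_on UNIV G"
  proof (rule convex_on_realI[where f' = "\<lambda>t. 2 * g1 t"])
    show "connected (UNIV :: real set)" by simp
    show "(G has_real_derivative 2 * g1 x) (at x)" for x
      unfolding G_def g1_def by (rule psi_deriv1[OF k1])
    show "2 * g1 x \<le> 2 * g1 y" if "x \<le> y" for x y using mono[OF that] by simp
  qed
  have "G ((1 - 1/2) *\<^sub>R (t - L) + (1/2) *\<^sub>R (t + L)) \<le> (1 - 1/2) * G (t - L) + (1/2) * G (t + L)"
    by (rule convex_onD[OF conv]) auto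
  moreover have "(1 - 1/2) *\<^sub>R (t - L) + (1/2) *\<^sub>R (t + L) = t" by (simp add: field_simps)
  ultimately have "G t \<le> (G (t - L) + G (t + L)) / 2" by simp
  thus ?thesis unfolding G_def by (simp add: power2_eq_square algebra_simps)
qed



lemma dH_sym: "dH z w = dH w z"
  unfolding dH_def by (simp add: norm_minus_commute mult.commute mult.left_commute)

definition pdet :: "mat2 \<Rightarrow> real" where
  "pdet M = (case M of (a,b,c,d) \<Rightarrow> a*d - b*c)"

lemma denom_nz:
  assumes "a*d - b*c > 0" "y \<in> H2"
  shows "of_real c * y + of_real d \<noteq> 0"
proof
  assume h: "of_real c * y + of_real d = 0"
  have "Im (of_real c * y + of_real d) = c * Im y" by simp
  with h have "c * Im y = 0" by simp
  with assms(2) have c: "c = 0" by (simp add: H2_def)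
  with h have "d = 0" by simp
  with c assms(1) show False by simp
qed

lemma Im_mob:
  assumes "a*d - b*c > 0" "y \<in> H2"
  shows "Im (mob (a,b,c,d) y) = (a*d - b*c) * Im y / (cmod (of_real c * y + of_real d))\<^sup>2"
proof -
  have "(cmod (of_real c * y + of_real d))\<^sup>2 = (c * Re y + d)^2 + (c * Im y)^2"
    by (simp add: cmod_power2)
  thus ?thesis unfolding mob_def by (simp add: Im_divide power2_eq_square algebra_simps)
qed

lemma mob_H2:
  assumes "a*d - b*c > 0" "y \<in> H2"
  shows "mob (a,b,c,d) y \<in> H2"
  using Im_mob[OF assms] denom_nz[OF assms] assms by (simp add: H2_def)

lemma mob_diff:
  assumes "a*d - b*c > 0" "y \<in> H2" "y' \<in> H2"
  shows "mob (a,b,c,d) y - mob (a,b,c,d) y' =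
    of_real (a*d - b*c) * (y - y') / ((of_real c * y + of_real d) * (of_real c * y' + of_real d))"
  using denom_nz[OF assms(1,2)] denom_nz[OF assms(1,3)]
  unfolding mob_def by (simp add: field_simps)

lemma dH_mob:
  assumes "a*d - b*c > 0" "y \<in> H2" "y' \<in> H2"
  shows "dH (mob (a,b,c,d) y) (mob (a,b,c,d) y') = dH y y'"
proof -
  define A where "A = cmod (of_real c * y + of_real d)"
  define B where "B = cmod (of_real c * y' + of_real d)"
  define \<delta> where "\<delta> = a*d - b*c"
  have A: "A > 0" unfolding A_def using denom_nz[OF assms(1,2)] by simp
  have B: "B > 0" unfolding B_def using denom_nz[OF assms(1,3)] by simp
  have d: "\<delta> > 0" using assms \<delta>_def by simp
  have n: "cmod (mob (a,b,c,d) y - mob (a,b,c,d) y') = \<delta> * cmod (y - y') / (A * B)"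
    unfolding mob_diff[OF assms] A_def B_def \<delta>_def using assms(1)
    by (simp add: norm_mult norm_divide del: of_real_diff of_real_mult)
  have i1: "Im (mob (a,b,c,d) y) = \<delta> * Im y / A^2" using Im_mob[OF assms(1,2)] A_def \<delta>_def by simp
  have i2: "Im (mob (a,b,c,d) y') = \<delta> * Im y' / B^2" using Im_mob[OF assms(1,3)] B_def \<delta>_def by simp
  have "(cmod (mob (a,b,c,d) y - mob (a,b,c,d) y'))\<^sup>2 / (2 * Im (mob (a,b,c,d) y) * Im (mob (a,b,c,d) y'))
      = (cmod (y - y'))\<^sup>2 / (2 * Im y * Im y')"
    unfolding n i1 i2 using A B d by (simp add: field_simps power2_eq_square)
  thus ?thesis unfolding dH_def by simp
qed

lemma dH_scale:
  assumes "r > 0"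
  shows "dH (of_real r * y) (of_real r * y') = dH y y'"
proof -
  have "cmod (of_real r * y - of_real r * y') = r * cmod (y - y')"
    using assms by (simp add: right_diff_distrib[symmetric] norm_mult)
  hence "(cmod (of_real r * y - of_real r * y'))\<^sup>2 / (2 * Im (of_real r * y) * Im (of_real r * y'))
     = (cmod (y - y'))\<^sup>2 / (2 * Im y * Im y')"
    using assms by (simp add: field_simps power2_eq_square)
  thus ?thesis unfolding dH_def by simp
qed

lemma dH_axis:
  assumes "Y \<in> H2" "h > 0"
  shows "dH Y (\<i> * of_real h) = arcosh ((cmod Y / Im Y) * cosh (ln h - ln (cmod Y)))"
proof -
  have v: "Im Y > 0" using assms by (simp add: H2_def)
  have r: "cmod Y > 0" using v by (metis abs_Im_le_cmod abs_of_pos less_le_trans)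
  have r2: "(cmod Y)^2 = (Re Y)^2 + (Im Y)^2" by (simp add: cmod_power2)
  have c: "cosh (ln h - ln (cmod Y)) = (h / cmod Y + cmod Y / h) / 2"
    using r assms(2) by (simp add: cosh_field_def exp_diff exp_minus field_simps)
  have n: "(cmod (Y - \<i> * of_real h))\<^sup>2 = (Re Y)^2 + (Im Y - h)^2" by (simp add: cmod_power2)
  have "1 + (cmod (Y - \<i> * of_real h))\<^sup>2 / (2 * Im Y * Im (\<i> * of_real h))
     = (cmod Y / Im Y) * cosh (ln h - ln (cmod Y))"
    unfolding n c using v r assms(2) r2 by (simp add: field_simps power2_eq_square)
  thus ?thesis unfolding dH_def by simp
qed



lemma fix_shift:
  assumes "c*x^2 + (d-a)*x - b = 0" "of_real c * y + of_real d \<noteq> (0::complex)"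
  shows "mob (a,b,c,d) y - of_real x = of_real (a - c*x) * (y - of_real x) / (of_real c * y + of_real d)"
proof -
  have e: "of_real b = (of_real (c*x^2 + (d-a)*x) :: complex)" using assms(1) by (simp add: algebra_simps)
  show ?thesis using assms(2) unfolding mob_def
    by (simp add: field_simps e power2_eq_square)
qed

lemma caseA:
  assumes g: "a*d - b*c = 1" "\<bar>a + d\<bar> > 2" and c: "c = 0" and x: "(d - a) * x - b = 0"
    and z: "z \<in> H2" "Re z = x"
  shows "\<exists>N \<mu> w. pdet N > 0 \<and> \<mu> > 0 \<and> \<mu> \<noteq> 1 \<and> w > 0
     \<and> (\<forall>y\<in>H2. mob N (mob (a,b,c,d) y) = of_real \<mu> * mob N y)
     \<and> (\<forall>y\<in>H2. mob N (mob (mat_inv (a,b,c,d)) y) = of_real (inverse \<mu>) * mob N y)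
     \<and> mob N z = \<i> * of_real w"
proof -
  have ad: "a * d = 1" using g c by simp
  have d0: "d \<noteq> 0" "a \<noteq> 0" using ad by auto
  have ada: "a / d = a * a" using ad d0 by (simp add: field_simps)
  have mu: "a / d > 0" using ada d0 by (simp add: zero_less_mult_iff) linarith
  have mu1: "a / d \<noteq> 1"
  proof
    assume "a / d = 1" hence "a = d" using d0 by (simp add: field_simps)
    with ad g(2) have "a^2 = 1" "\<bar>a + a\<bar> > 2" by (auto simp: power2_eq_square)
    thus False unfolding power2_eq_1_iff by auto
  qed
  define N :: mat2 where "N = (1, -x, 0, 1)"
  have TN: "mob N y = y - of_real x" for y unfolding N_def mob_def by simp
  have pN: "pdet N > 0" unfolding N_def pdet_def by simp
  have A1: "mob N (mob (a,b,c,d) y) = of_real (a/d) * mob N y" if y: "y \<in> H2" for y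
  proof -
    have nz: "of_real c * y + of_real d \<noteq> 0" using denom_nz[of a d b c y] g y by simp
    have "mob (a,b,c,d) y - of_real x = of_real (a - c*x) * (y - of_real x) / (of_real c * y + of_real d)"
      by (rule fix_shift) (use x c nz in auto)
    thus ?thesis unfolding TN using c by simp
  qed
  have A2: "mob N (mob (mat_inv (a,b,c,d)) y) = of_real (inverse (a/d)) * mob N y" if y: "y \<in> H2" for y
  proof -
    have nz: "of_real (-c) * y + of_real a \<noteq> 0" using denom_nz[of d a "-b" "-c" y] g y by (simp add: mult.commute)
    have "mob (d,-b,-c,a) y - of_real x = of_real (d - (-c)*x) * (y - of_real x) / (of_real (-c) * y + of_real a)"
      by (rule fix_shift) (use x c nz in \<open>auto simp: algebra_simps\<close>)
    thus ?thesis unfolding TN mat_inv_def using c by simp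
  qed
  have Z: "mob N z = \<i> * of_real (Im z)" unfolding TN using z by (simp add: complex_eq_iff)
  show ?thesis
    apply (rule exI[of _ N], rule exI[of _ "a/d"], rule exI[of _ "Im z"])
    using pN mu mu1 A1 A2 Z z by (auto simp: H2_def)
qed

lemma fr_aux: True by simp

lemma caseB':
  assumes g: "a*d - b*c = 1" and c: "c \<noteq> 0"
    and x1: "c*x1^2 + (d-a)*x1 - b = 0" and x2: "c*x2^2 + (d-a)*x2 - b = 0" and lt: "x1 < x2"
    and z: "z \<in> H2" "cmod (z - of_real ((x1 + x2) / 2)) = \<bar>x1 - x2\<bar> / 2"
  shows "\<exists>N \<mu> w. pdet N > 0 \<and> \<mu> > 0 \<and> \<mu> \<noteq> 1 \<and> w > 0
     \<and> (\<forall>y\<in>H2. mob N (mob (a,b,c,d) y) = of_real \<mu> * mob N y)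
     \<and> (\<forall>y\<in>H2. mob N (mob (mat_inv (a,b,c,d)) y) = of_real (inverse \<mu>) * mob N y)
     \<and> mob N z = \<i> * of_real w"
proof -
  have s: "c * (x1 + x2) = a - d"
  proof -
    have "(x1 - x2) * (c * (x1 + x2) + (d - a)) = 0" using x1 x2 by (simp add: algebra_simps power2_eq_square)
    thus ?thesis using lt by simp
  qed
  have p: "c * x1 * x2 = - b"
  proof -
    have "d - a = -(c * (x1 + x2))" using s by simp
    hence "c*x1^2 + (-(c * (x1 + x2)))*x1 - b = 0" using x1 by simp
    thus ?thesis by (simp add: algebra_simps power2_eq_square)
  qed
  have prod: "(a - c*x1) * (a - c*x2) = 1"
  proof -
    have "(a - c*x1) * (a - c*x2) = a*a - a * (c * (x1 + x2)) + c * (c * x1 * x2)" by (simp add: algebra_simps)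
    also have "\<dots> = a * d - b * c" unfolding s p by (simp add: algebra_simps)
    finally show ?thesis using g by simp
  qed
  have q1: "(a - c*x1) * (c*x1 + d) = 1"
  proof -
    have "(a - c*x1) * (c*x1 + d) = a*d - c*(c*x1^2 + (d-a)*x1)" by (simp add: algebra_simps power2_eq_square)
    also have "c*x1^2 + (d-a)*x1 = b" using x1 by simp
    finally show ?thesis using g by (simp add: mult.commute)
  qed
  have q2: "(a - c*x2) * (c*x2 + d) = 1"
  proof -
    have "(a - c*x2) * (c*x2 + d) = a*d - c*(c*x2^2 + (d-a)*x2)" by (simp add: algebra_simps power2_eq_square)
    also have "c*x2^2 + (d-a)*x2 = b" using x2 by simp
    finally show ?thesis using g by (simp add: mult.commute)
  qed
  define \<mu> where "\<mu> = (a - c*x2) / (a - c*x1)"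
  have n1: "a - c*x1 \<noteq> 0" "a - c*x2 \<noteq> 0" using prod by auto
  have mu: "\<mu> > 0" unfolding \<mu>_def using prod
    by (metis divide_pos_pos divide_neg_neg mult_pos_neg mult_neg_pos not_less_iff_gr_or_eq zero_less_one
        less_asym n1)
  have mu1: "\<mu> \<noteq> 1"
  proof
    assume "\<mu> = 1" hence "a - c*x2 = a - c*x1" using n1 unfolding \<mu>_def by (auto simp add: field_simps)
    thus False using c lt by simp
  qed
  have muinv: "inverse \<mu> = (d - (-c)*x2) / (d - (-c)*x1)"
  proof -
    have "d - (-c)*x2 = inverse (a - c*x2)" "d - (-c)*x1 = inverse (a - c*x1)" using q1 q2 n1
      by (auto simp: field_simps)
    thus ?thesis unfolding \<mu>_def by (auto simp add: field_simps)
  qed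
  define N :: mat2 where "N = (1, -x2, 1, -x1)"
  have TN: "mob N y = (y - of_real x2) / (y - of_real x1)" for y unfolding N_def mob_def by simp
  have pN: "pdet N > 0" unfolding N_def pdet_def using lt by simp
  have gen: "mob N (mob (a',b',c',d') y) = of_real ((a' - c'*x2) / (a' - c'*x1)) * mob N y"
    if y: "y \<in> H2" and dt: "a'*d' - b'*c' > 0" and r1: "c'*x1^2 + (d'-a')*x1 - b' = 0"
      and r2: "c'*x2^2 + (d'-a')*x2 - b' = 0" and nz1: "a' - c'*x1 \<noteq> 0" for a' b' c' d' y
  proof -
    have nz: "of_real c' * y + of_real d' \<noteq> 0" using denom_nz[OF dt y] .
    have yx: "y - of_real x1 \<noteq> 0" using y by (auto simp: H2_def)
    have e1: "mob (a',b',c',d') y - of_real x1 = of_real (a' - c'*x1) * (y - of_real x1) / (of_real c' * y + of_real d')"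
      by (rule fix_shift[OF r1 nz])
    have e2: "mob (a',b',c',d') y - of_real x2 = of_real (a' - c'*x2) * (y - of_real x2) / (of_real c' * y + of_real d')"
      by (rule fix_shift[OF r2 nz])
    have nz1': "(of_real (a' - c'*x1) :: complex) \<noteq> 0" using nz1 by (metis of_real_eq_0_iff)
    have fr: "(qq * uu / dd) / (pp * vv / dd) = (qq / pp) * (uu / vv)" if "dd \<noteq> 0" "pp \<noteq> 0" for qq uu dd pp vv :: complex
      using that by (simp add: field_simps)
    show ?thesis unfolding TN e1 e2 fr[OF nz nz1'] of_real_divide by simp

  qed
  have A1: "mob N (mob (a,b,c,d) y) = of_real \<mu> * mob N y" if "y \<in> H2" for y
    unfolding \<mu>_def by (rule gen) (use that g x1 x2 n1 in auto)
  have A2: "mob N (mob (mat_inv (a,b,c,d)) y) = of_real (inverse \<mu>) * mob N y" if "y \<in> H2" for y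
  proof -
    have mi: "mat_inv (a,b,c,d) = (d,-b,-c,a)" by (simp add: mat_inv_def)
    have nzi: "c*x1 + d \<noteq> 0" using q1 by auto
    show ?thesis unfolding muinv mi
      by (rule gen) (use that g x1 x2 nzi in \<open>auto simp: algebra_simps\<close>)
  qed
  define Y where "Y = mob N z"
  have YH: "Y \<in> H2" unfolding Y_def N_def using mob_H2[of 1 "-x1" "-x2" 1 z] lt z by simp
  have circ: "(Re z - x1) * (Re z - x2) + (Im z)^2 = 0"
  proof -
    have "(\<bar>x1 - x2\<bar> / 2)^2 = (cmod (z - of_real ((x1 + x2) / 2)))^2" by (simp only: z(2))
    also have "\<dots> = (Re z - (x1+x2)/2)^2 + (Im z)^2" by (simp only: cmod_power2) simp
    finally have "(Re z - (x1+x2)/2)^2 + (Im z)^2 = (x1 - x2)^2 / 4" by (simp add: power_divide)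
    thus ?thesis by (simp add: field_simps power2_eq_square)
  qed
  have ReY: "Re Y = 0" unfolding Y_def TN using circ by (simp add: Re_divide algebra_simps power2_eq_square)
  have Z: "mob N z = \<i> * of_real (Im Y)" unfolding Y_def[symmetric] using ReY by (simp add: complex_eq_iff)
  show ?thesis
    apply (rule exI[of _ N], rule exI[of _ \<mu>], rule exI[of _ "Im Y"])
    using pN mu mu1 A1 A2 Z YH by (auto simp: H2_def)
qed

lemma Some_ideal: "Some x \<in> ideal_fixed (a,b,c,d) \<longleftrightarrow> c*x^2 + (d-a)*x - b = 0 \<and> c*x + d \<noteq> 0"
  unfolding ideal_fixed_def by auto

lemma None_ideal: "None \<in> ideal_fixed (a,b,c,d) \<longleftrightarrow> c = 0"
  unfolding ideal_fixed_def by auto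

lemma caseB:
  assumes g: "a*d - b*c = 1" and c: "c \<noteq> 0"
    and x1: "c*x1^2 + (d-a)*x1 - b = 0" and x2: "c*x2^2 + (d-a)*x2 - b = 0" and ne: "x1 \<noteq> x2"
    and z: "z \<in> H2" "cmod (z - of_real ((x1 + x2) / 2)) = \<bar>x1 - x2\<bar> / 2"
  shows "\<exists>N \<mu> w. pdet N > 0 \<and> \<mu> > 0 \<and> \<mu> \<noteq> 1 \<and> w > 0
     \<and> (\<forall>y\<in>H2. mob N (mob (a,b,c,d) y) = of_real \<mu> * mob N y)
     \<and> (\<forall>y\<in>H2. mob N (mob (mat_inv (a,b,c,d)) y) = of_real (inverse \<mu>) * mob N y)
     \<and> mob N z = \<i> * of_real w"
proof (cases "x1 < x2")
  case True thus ?thesis using caseB'[OF g c x1 x2 True z] by blast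
next
  case False
  hence lt: "x2 < x1" using ne by simp
  have z': "cmod (z - of_real ((x2 + x1) / 2)) = \<bar>x2 - x1\<bar> / 2" using z(2)
    by (simp add: add.commute abs_minus_commute)
  show ?thesis using caseB'[OF g c x2 x1 lt z(1) z'] by blast
qed

lemma normal_form:
  assumes "sl2 g" "hyperbolic g" "z \<in> invariant_axis g"
  shows "z \<in> H2 \<and> (\<exists>N \<mu> w. pdet N > 0 \<and> \<mu> > 0 \<and> \<mu> \<noteq> 1 \<and> w > 0
     \<and> (\<forall>y\<in>H2. mob N (mob g y) = of_real \<mu> * mob N y)
     \<and> (\<forall>y\<in>H2. mob N (mob (mat_inv g) y) = of_real (inverse \<mu>) * mob N y)
     \<and> mob N z = \<i> * of_real w)"
proof -
  obtain a b c d where gg: "g = (a,b,c,d)" by (cases g) auto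
  have det: "a*d - b*c = 1" and hyp: "\<bar>a + d\<bar> > 2" using assms(1,2) gg by (auto simp: sl2_def hyperbolic_def)
  from assms(3) obtain p q where zpq: "z \<in> geodesic_between p q" and pq: "p \<in> ideal_fixed g" "q \<in> ideal_fixed g" "p \<noteq> q"
    unfolding invariant_axis_def by blast
  have zH: "z \<in> H2" using zpq unfolding geodesic_between_def by blast
  have ex: "\<exists>N \<mu> w. pdet N > 0 \<and> \<mu> > 0 \<and> \<mu> \<noteq> 1 \<and> w > 0
     \<and> (\<forall>y\<in>H2. mob N (mob (a,b,c,d) y) = of_real \<mu> * mob N y)
     \<and> (\<forall>y\<in>H2. mob N (mob (mat_inv (a,b,c,d)) y) = of_real (inverse \<mu>) * mob N y)
     \<and> mob N z = \<i> * of_real w"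
  proof (cases p)
    case None note pN = None
    show ?thesis
    proof (cases q)
      case None with pN pq show ?thesis by simp
    next
      case (Some x)
      have "c = 0" using pq(1) pN gg None_ideal by simp
      moreover have "c*x^2 + (d-a)*x - b = 0" using pq(2) Some gg Some_ideal by simp
      moreover have "Re z = x" using zpq pN Some unfolding geodesic_between_def by simp
      ultimately show ?thesis using caseA[OF det hyp, of x z] zH by simp
    qed
  next
    case (Some x1) note pS = Some
    show ?thesis
    proof (cases q)
      case None
      have "c = 0" using pq(2) None gg None_ideal by simp
      moreover have "c*x1^2 + (d-a)*x1 - b = 0" using pq(1) pS gg Some_ideal by simp
      moreover have "Re z = x1" using zpq pS None unfolding geodesic_between_def by simp
      ultimately show ?thesis using caseA[OF det hyp, of x1 z] zH by simp
    next
      case (Some x2)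
      have r1: "c*x1^2 + (d-a)*x1 - b = 0" using pq(1) pS gg Some_ideal by simp
      have r2: "c*x2^2 + (d-a)*x2 - b = 0" using pq(2) Some gg Some_ideal by simp
      have ne: "x1 \<noteq> x2" using pq(3) pS Some by simp
      have circ: "cmod (z - of_real ((x1 + x2) / 2)) = \<bar>x1 - x2\<bar> / 2"
        using zpq pS Some unfolding geodesic_between_def by simp
      have c: "c \<noteq> 0"
      proof
        assume c0: "c = 0"
        hence "(d - a) * (x1 - x2) = 0" using r1 r2 by (simp add: algebra_simps)
        hence "a = d" using ne by simp
        with det c0 have "a^2 = 1" "\<bar>a + a\<bar> > 2" using hyp by (auto simp: power2_eq_square)
        thus False unfolding power2_eq_1_iff by auto
      qed
      show ?thesis using caseB[OF det c r1 r2 ne zH circ] .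
    qed
  qed
  show ?thesis using zH ex gg by simp
qed



lemma sl2_mult: "sl2 M \<Longrightarrow> sl2 N \<Longrightarrow> sl2 (mat_mult M N)"
  by (cases M, cases N) (auto simp: sl2_def mat_mult_def algebra_simps)

lemma sl2_inv: "sl2 M \<Longrightarrow> sl2 (mat_inv M)"
  by (cases M) (auto simp: sl2_def mat_inv_def algebra_simps)

lemma sl2_id: "sl2 mat_id" by (simp add: sl2_def mat_id_def)

lemma mob_id: "mob mat_id y = y" by (simp add: mob_def mat_id_def)

lemma sl2_pdet: "sl2 M \<Longrightarrow> pdet M > 0"
  by (cases M) (auto simp: sl2_def pdet_def)

lemma pdet_H2: "pdet N > 0 \<Longrightarrow> y \<in> H2 \<Longrightarrow> mob N y \<in> H2"
  by (cases N) (auto simp: pdet_def intro: mob_H2)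

lemma pdet_iso: "pdet N > 0 \<Longrightarrow> y \<in> H2 \<Longrightarrow> y' \<in> H2 \<Longrightarrow> dH (mob N y) (mob N y') = dH y y'"
  by (cases N) (auto simp: pdet_def intro: dH_mob)

lemma mob_mult:
  assumes "sl2 N" "y \<in> H2"
  shows "mob (mat_mult M N) y = mob M (mob N y)"
proof -
  obtain a b c d where M: "M = (a,b,c,d)" by (cases M) auto
  obtain e f g h where N: "N = (e,f,g,h)" by (cases N) auto
  have nz: "of_real g * y + of_real h \<noteq> 0" using denom_nz[of e h f g y] assms N by (simp add: sl2_def)
  have fr: "(A*(u/v)+B)/(C*(u/v)+D) = (A*u+B * v)/(C*u+D * v)" if "v \<noteq> 0" for A B C D u v :: complex
  proof -
    have "A*(u/v)+B = (A*u+B * v)/v" "C*(u/v)+D = (C*u+D * v)/v" using that by (simp_all add: field_simps)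
    thus ?thesis using that by simp
  qed
  define u where "u = of_real e * y + of_real f"
  define v where "v = of_real g * y + of_real h"
  have "mob M (mob N y) = (of_real a * (u/v) + of_real b)/(of_real c*(u/v) + of_real d)"
    by (simp add: M N mob_def u_def v_def)
  also have "\<dots> = (of_real a * u + of_real b * v)/(of_real c * u + of_real d * v)"
    by (rule fr) (use nz v_def in simp)
  also have "\<dots> = mob (mat_mult M N) y"
    by (simp add: M N mob_def mat_mult_def u_def v_def algebra_simps)
  finally show ?thesis by simp
qed

lemma iter_mob:
  assumes "sl2 M"
  shows "sl2 ((mat_mult M ^^ k) mat_id) \<and> (\<forall>y\<in>H2. mob ((mat_mult M ^^ k) mat_id) y = (mob M ^^ k) y)"
proof (induction k)
  case 0 thus ?case by (simp add: sl2_id mob_id)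
next
  case (Suc k)
  thus ?case using assms by (simp add: sl2_mult mob_mult)
qed

lemma sl2_H2: "sl2 M \<Longrightarrow> y \<in> H2 \<Longrightarrow> mob M y \<in> H2"
  using pdet_H2 sl2_pdet by blast

lemma iter_conj:
  assumes "sl2 M" "\<forall>y\<in>H2. mob N (mob M y) = of_real \<nu> * mob N y" "y \<in> H2"
  shows "(mob M ^^ k) y \<in> H2 \<and> mob N ((mob M ^^ k) y) = of_real (\<nu> ^ k) * mob N y"
proof (induction k)
  case 0 thus ?case using assms by simp
next
  case (Suc k)
  thus ?case using assms by (simp add: sl2_H2)
qed

lemma orbit:
  assumes g: "sl2 g" and mu: "\<mu> > 0"
    and c1: "\<forall>y\<in>H2. mob N (mob g y) = of_real \<mu> * mob N y"
    and c2: "\<forall>y\<in>H2. mob N (mob (mat_inv g) y) = of_real (inverse \<mu>) * mob N y"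
    and y: "y \<in> H2"
  shows "mob (mat_zpow g n) y \<in> H2 \<and> mob N (mob (mat_zpow g n) y) = of_real (exp (of_int n * ln \<mu>)) * mob N y"
proof (cases "n \<ge> 0")
  case True
  have e: "exp (of_int n * ln \<mu>) = \<mu> ^ nat n"
  proof -
    have "exp (of_int n * ln \<mu>) = exp (real (nat n) * ln \<mu>)" using True by simp
    also have "\<dots> = exp (ln \<mu>) ^ nat n" by (rule exp_of_nat_mult)
    finally show ?thesis using mu by simp
  qed
  have z: "mat_zpow g n = (mat_mult g ^^ nat n) mat_id" using True by (simp add: mat_zpow_def)
  show ?thesis unfolding z e using iter_mob[OF g, of "nat n"] iter_conj[OF g c1 y, of "nat n"] y by simp
next
  case False
  have gi: "sl2 (mat_inv g)" using sl2_inv[OF g] .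
  have e: "exp (of_int n * ln \<mu>) = (inverse \<mu>) ^ nat (-n)"
  proof -
    have "exp (of_int n * ln \<mu>) = exp (- (real (nat (-n)) * ln \<mu>))" using False by simp
    also have "\<dots> = inverse (exp (ln \<mu>) ^ nat (-n))" by (simp only: exp_minus exp_of_nat_mult)
    finally show ?thesis using mu by (simp add: power_inverse)
  qed
  have z: "mat_zpow g n = (mat_mult (mat_inv g) ^^ nat (-n)) mat_id" using False by (simp add: mat_zpow_def)
  show ?thesis unfolding z e using iter_mob[OF gi, of "nat (-n)"] iter_conj[OF gi c2 y, of "nat (-n)"] y by simp
qed

lemma mat_zpow_0: "mat_zpow M 0 = mat_id" by (simp add: mat_zpow_def)
lemma mat_zpow_1: "mat_zpow M 1 = M" by (cases M) (simp add: mat_zpow_def mat_mult_def mat_id_def)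
lemma mat_zpow_m1: "mat_zpow M (-1) = mat_inv M"
  by (cases M) (simp add: mat_zpow_def mat_mult_def mat_id_def mat_inv_def)



lemma coord:
  assumes "sl2 g" "hyperbolic g" "z \<in> invariant_axis g"
  shows "z \<in> H2 \<and> (\<forall>n. \<forall>y\<in>H2. mob (mat_zpow g n) y \<in> H2) \<and> mob g z \<noteq> z \<and> mob (mat_inv g) z \<noteq> z \<and>
    (\<exists>L. L \<noteq> 0 \<and> (\<forall>q\<in>H2. \<exists>k a. k \<ge> 1 \<and> (\<forall>n::int.
        dH q (mob (mat_zpow g n) z) = arcosh (k * cosh (a + of_int n * L)) \<and>
        dH z (mob (mat_zpow g n) q) = arcosh (k * cosh (a - of_int n * L)))))"
proof -
  from normal_form[OF assms] obtain N \<mu> w where zH: "z \<in> H2" and pN: "pdet N > 0" and mu: "\<mu> > 0" "\<mu> \<noteq> 1"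
    and w: "w > 0" and c1: "\<forall>y\<in>H2. mob N (mob g y) = of_real \<mu> * mob N y"
    and c2: "\<forall>y\<in>H2. mob N (mob (mat_inv g) y) = of_real (inverse \<mu>) * mob N y"
    and Tz: "mob N z = \<i> * of_real w" by blast
  define L where "L = ln \<mu>"
  have L0: "L \<noteq> 0" unfolding L_def using mu by simp
  note orb = orbit[OF assms(1) mu(1) c1 c2]
  have H: "\<forall>n. \<forall>y\<in>H2. mob (mat_zpow g n) y \<in> H2" using orb by blast
  have mv: "mob g z \<noteq> z"
  proof
    assume "mob g z = z"
    hence "mob N z = of_real \<mu> * mob N z" using c1 zH by metis
    with Tz w mu show False by simp
  qed
  have mv2: "mob (mat_inv g) z \<noteq> z"
  proof
    assume "mob (mat_inv g) z = z"
    hence "mob N z = of_real (inverse \<mu>) * mob N z" using c2 zH by metis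
    with Tz w mu show False by simp
  qed
  have D: "\<exists>k a. k \<ge> 1 \<and> (\<forall>n::int.
        dH q (mob (mat_zpow g n) z) = arcosh (k * cosh (a + of_int n * L)) \<and>
        dH z (mob (mat_zpow g n) q) = arcosh (k * cosh (a - of_int n * L)))" if q: "q \<in> H2" for q
  proof -
    define Y where "Y = mob N q"
    have YH: "Y \<in> H2" unfolding Y_def using pdet_H2[OF pN q] .
    have v: "Im Y > 0" using YH by (simp add: H2_def)
    have k: "cmod Y / Im Y \<ge> 1" using v abs_Im_le_cmod[of Y] by simp
    define a where "a = ln w - ln (cmod Y)"
    have "dH q (mob (mat_zpow g n) z) = arcosh (cmod Y / Im Y * cosh (a + of_int n * L)) \<and>
        dH z (mob (mat_zpow g n) q) = arcosh (cmod Y / Im Y * cosh (a - of_int n * L))" for n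
    proof
      have o1: "mob (mat_zpow g n) z \<in> H2" "mob N (mob (mat_zpow g n) z) = of_real (exp (of_int n * L)) * mob N z"
        using orb[OF zH, of n] L_def by auto
      have "dH q (mob (mat_zpow g n) z) = dH Y (mob N (mob (mat_zpow g n) z))"
        unfolding Y_def using pdet_iso[OF pN q o1(1)] by simp
      also have "\<dots> = dH Y (\<i> * of_real (w * exp (of_int n * L)))" unfolding o1(2) Tz by (simp add: algebra_simps)
      also have "\<dots> = arcosh (cmod Y / Im Y * cosh (ln (w * exp (of_int n * L)) - ln (cmod Y)))"
        by (rule dH_axis[OF YH]) (use w in simp)
      also have "ln (w * exp (of_int n * L)) - ln (cmod Y) = a + of_int n * L"
        unfolding a_def using w by (simp add: ln_mult)
      finally show "dH q (mob (mat_zpow g n) z) = arcosh (cmod Y / Im Y * cosh (a + of_int n * L))" .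
    next
      have o2: "mob (mat_zpow g n) q \<in> H2" "mob N (mob (mat_zpow g n) q) = of_real (exp (of_int n * L)) * Y"
        using orb[OF q, of n] L_def Y_def by auto
      define r where "r = exp (- (of_int n * L))"
      have r: "r > 0" unfolding r_def by simp
      have "dH z (mob (mat_zpow g n) q) = dH (mob N z) (mob N (mob (mat_zpow g n) q))"
        using pdet_iso[OF pN zH o2(1)] by simp
      also have "\<dots> = dH (of_real r * (\<i> * of_real w)) (of_real r * (of_real (exp (of_int n * L)) * Y))"
        unfolding o2(2) Tz by (rule dH_scale[symmetric, OF r])
      also have "of_real r * (of_real (exp (of_int n * L)) * Y) = Y"
        unfolding r_def by (simp add: exp_minus mult.assoc[symmetric] of_real_mult[symmetric])
      also have "of_real r * (\<i> * of_real w) = \<i> * of_real (w * r)" by (simp add: algebra_simps)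
      also have "dH (\<i> * of_real (w * r)) Y = dH Y (\<i> * of_real (w * r))" by (rule dH_sym)
      also have "\<dots> = arcosh (cmod Y / Im Y * cosh (ln (w * r) - ln (cmod Y)))"
        by (rule dH_axis[OF YH]) (use w r in simp)
      also have "ln (w * r) - ln (cmod Y) = a - of_int n * L"
        unfolding a_def r_def using w by (simp add: ln_mult)
      finally show "dH z (mob (mat_zpow g n) q) = arcosh (cmod Y / Im Y * cosh (a - of_int n * L))" .
    qed
    thus ?thesis using k by blast
  qed
  show ?thesis using zH H mv mv2 L0 D by blast
qed



lemma discrete_nat:
  fixes f :: "int \<Rightarrow> real"
  assumes c: "\<And>n. f (n+1) + f (n-1) \<ge> 2 * f n" and f1: "f 1 \<ge> f 0"
  shows "f (int k + 1) \<ge> f (int k) \<and> f (int k) \<ge> f 0"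
proof (induction k)
  case 0 thus ?case using f1 by simp
next
  case (Suc k)
  have "f (int k + 1 + 1) + f (int k + 1 - 1) \<ge> 2 * f (int k + 1)" by (rule c)
  hence "f (int k + 2) + f (int k) \<ge> 2 * f (int k + 1)" by (simp add: add.assoc)
  thus ?case using Suc by (simp add: ac_simps)
qed

lemma discrete:
  fixes f :: "int \<Rightarrow> real"
  assumes c: "\<And>n. f (n+1) + f (n-1) \<ge> 2 * f n" and f1: "f 1 \<ge> f 0" and fm1: "f (-1) \<ge> f 0"
  shows "f m \<ge> f 0"
proof (cases "m \<ge> 0")
  case True
  then obtain k where "m = int k" by (metis nonneg_int_cases)
  thus ?thesis using discrete_nat[OF c f1, of k] by simp
next
  case False
  then obtain k where k: "m = - int k" by (metis nonpos_int_cases not_le less_imp_le)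
  define g where "g n = f (- n)" for n
  have cg: "g (n+1) + g (n-1) \<ge> 2 * g n" for n
  proof -
    have "-(n+1) = (-n) - 1" "-(n-1) = (-n) + 1" by simp_all
    thus ?thesis using c[of "-n"] unfolding g_def by (simp only:)
  qed
  have "g (int k) \<ge> g 0" using discrete_nat[of g, OF cg, of k] fm1 unfolding g_def by simp
  thus ?thesis using k unfolding g_def by simp
qed

lemma key:
  assumes "sl2 g1" "sl2 g2" "hyperbolic g1" "hyperbolic g2"
    "z1 \<in> invariant_axis g1" "z2 \<in> invariant_axis g2"
  shows "(z1, z2) \<in> H2H2 \<and> pact (g1, g2) (z1, z2) \<noteq> (z1, z2) \<and> pact (pinv (g1, g2)) (z1, z2) \<noteq> (z1, z2)
   \<and> (\<forall>q\<in>H2H2. \<exists>P::int\<Rightarrow>real. (\<forall>n. P (n+1) + P (n-1) > 2 * P n)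
     \<and> rho q (z1,z2) = sqrt (P 0) \<and> rho q (pact (g1, g2) (z1, z2)) = sqrt (P 1)
     \<and> rho q (pact (pinv (g1, g2)) (z1, z2)) = sqrt (P (-1))
     \<and> (\<forall>n. rho (z1,z2) (pact (mat_zpow g1 n, mat_zpow g2 n) q) = sqrt (P (-n))))"
proof -
  note C1 = coord[OF assms(1,3,5)] and C2 = coord[OF assms(2,4,6)]
  from C1 obtain L1 where L1: "L1 \<noteq> 0" and D1: "\<forall>q\<in>H2. \<exists>k a. k \<ge> 1 \<and> (\<forall>n::int.
        dH q (mob (mat_zpow g1 n) z1) = arcosh (k * cosh (a + of_int n * L1)) \<and>
        dH z1 (mob (mat_zpow g1 n) q) = arcosh (k * cosh (a - of_int n * L1)))" by blast
  from C2 obtain L2 where L2: "L2 \<noteq> 0" and D2: "\<forall>q\<in>H2. \<exists>k a. k \<ge> 1 \<and> (\<forall>n::int.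
        dH q (mob (mat_zpow g2 n) z2) = arcosh (k * cosh (a + of_int n * L2)) \<and>
        dH z2 (mob (mat_zpow g2 n) q) = arcosh (k * cosh (a - of_int n * L2)))" by blast
  have zz: "(z1, z2) \<in> H2H2" using C1 C2 by (simp add: H2H2_def)
  have m1: "pact (g1, g2) (z1, z2) \<noteq> (z1, z2)" using C1 by (simp add: pact_def)
  have m2: "pact (pinv (g1, g2)) (z1, z2) \<noteq> (z1, z2)" using C1 by (simp add: pact_def pinv_def)
  have PP: "\<exists>P::int\<Rightarrow>real. (\<forall>n. P (n+1) + P (n-1) > 2 * P n)
     \<and> rho q (z1,z2) = sqrt (P 0) \<and> rho q (pact (g1, g2) (z1, z2)) = sqrt (P 1)
     \<and> rho q (pact (pinv (g1, g2)) (z1, z2)) = sqrt (P (-1))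
     \<and> (\<forall>n. rho (z1,z2) (pact (mat_zpow g1 n, mat_zpow g2 n) q) = sqrt (P (-n)))" if q: "q \<in> H2H2" for q
  proof -
    obtain q1 q2 where qq: "q = (q1, q2)" by (cases q)
    have q1: "q1 \<in> H2" and q2: "q2 \<in> H2" using q qq by (auto simp: H2H2_def)
    from D1 q1 obtain k1 a1 where k1: "k1 \<ge> 1" and E1: "\<forall>n::int.
        dH q1 (mob (mat_zpow g1 n) z1) = arcosh (k1 * cosh (a1 + of_int n * L1)) \<and>
        dH z1 (mob (mat_zpow g1 n) q1) = arcosh (k1 * cosh (a1 - of_int n * L1))" by blast
    from D2 q2 obtain k2 a2 where k2: "k2 \<ge> 1" and E2: "\<forall>n::int.
        dH q2 (mob (mat_zpow g2 n) z2) = arcosh (k2 * cosh (a2 + of_int n * L2)) \<and>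
        dH z2 (mob (mat_zpow g2 n) q2) = arcosh (k2 * cosh (a2 - of_int n * L2))" by blast
    define P where "P n = (arcosh (k1 * cosh (a1 + of_int n * L1)))\<^sup>2 + (arcosh (k2 * cosh (a2 + of_int n * L2)))\<^sup>2" for n :: int
    have conv: "P (n+1) + P (n-1) > 2 * P n" for n
    proof -
      have i1: "a1 + of_int (n+1) * L1 = (a1 + of_int n * L1) + L1" "a1 + of_int (n-1) * L1 = (a1 + of_int n * L1) - L1"
        by (simp_all add: algebra_simps)
      have i2: "a2 + of_int (n+1) * L2 = (a2 + of_int n * L2) + L2" "a2 + of_int (n-1) * L2 = (a2 + of_int n * L2) - L2"
        by (simp_all add: algebra_simps)
      have "P (n+1) + P (n-1) \<ge> 2 * P n + 2 * L1\<^sup>2 + 2 * L2\<^sup>2"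
        unfolding P_def i1 i2 using psi_mid[OF k1, of "a1 + of_int n * L1" L1] psi_mid[OF k2, of "a2 + of_int n * L2" L2]
        by simp
      moreover have "L1\<^sup>2 > 0" using L1 by simp
      moreover have "L2\<^sup>2 > 0" using L2 by simp
      ultimately show ?thesis by linarith
    qed
    have r0: "rho q (z1,z2) = sqrt (P 0)"
      using E1[rule_format, of 0] E2[rule_format, of 0] unfolding qq rho_def P_def
      by (simp add: mat_zpow_0 mob_id)
    have r1: "rho q (pact (g1, g2) (z1, z2)) = sqrt (P 1)"
      using E1[rule_format, of 1] E2[rule_format, of 1] unfolding qq rho_def P_def
      by (simp add: mat_zpow_1 pact_def)
    have r2: "rho q (pact (pinv (g1, g2)) (z1, z2)) = sqrt (P (-1))"
      using E1[rule_format, of "-1"] E2[rule_format, of "-1"] unfolding qq rho_def P_def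
      by (simp add: mat_zpow_m1 pact_def pinv_def)
    have r3: "rho (z1,z2) (pact (mat_zpow g1 n, mat_zpow g2 n) q) = sqrt (P (-n))" for n
      using E1[rule_format, of n] E2[rule_format, of n] unfolding qq rho_def P_def
      by (simp add: pact_def)
    show ?thesis using conv r0 r1 r2 r3 by blast
  qed
  show ?thesis using zz m1 m2 PP by blast
qed

theorem mainTheorem4:
  fixes g1 g2 :: mat2 and z1 z2 :: complex
  assumes "sl2 g1" "sl2 g2"
    and "hyperbolic g1" "hyperbolic g2"
    and "z1 \<in> invariant_axis g1" "z2 \<in> invariant_axis g2"
  shows "bisector (z1, z2) (pact (g1, g2) (z1, z2))
           \<inter> bisector (z1, z2) (pact (pinv (g1, g2)) (z1, z2)) = {}
     \<and> dirichlet (cyclic_group (g1, g2)) (z1, z2)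
         = halfspace (z1, z2) (pact (g1, g2) (z1, z2))
           \<inter> halfspace (z1, z2) (pact (pinv (g1, g2)) (z1, z2))"
proof -
  note K = key[OF assms]
  have zz: "(z1, z2) \<in> H2H2" and m1: "pact (g1, g2) (z1, z2) \<noteq> (z1, z2)"
    and m2: "pact (pinv (g1, g2)) (z1, z2) \<noteq> (z1, z2)" using K by auto
  have PP: "\<And>q. q \<in> H2H2 \<Longrightarrow> \<exists>P::int\<Rightarrow>real. (\<forall>n. P (n+1) + P (n-1) > 2 * P n)
     \<and> rho q (z1,z2) = sqrt (P 0) \<and> rho q (pact (g1, g2) (z1, z2)) = sqrt (P 1)
     \<and> rho q (pact (pinv (g1, g2)) (z1, z2)) = sqrt (P (-1))
     \<and> (\<forall>n. rho (z1,z2) (pact (mat_zpow g1 n, mat_zpow g2 n) q) = sqrt (P (-n)))"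
    using K by blast
  have part1: "bisector (z1, z2) (pact (g1, g2) (z1, z2))
           \<inter> bisector (z1, z2) (pact (pinv (g1, g2)) (z1, z2)) = {}"
  proof (rule equals0I)
    fix x assume x: "x \<in> bisector (z1, z2) (pact (g1, g2) (z1, z2))
           \<inter> bisector (z1, z2) (pact (pinv (g1, g2)) (z1, z2))"
    hence xH: "x \<in> H2H2" by (simp add: bisector_def)
    from PP[OF xH] obtain P :: "int \<Rightarrow> real" where c: "\<forall>n. P (n+1) + P (n-1) > 2 * P n"
      and r0: "rho x (z1,z2) = sqrt (P 0)" and r1: "rho x (pact (g1, g2) (z1, z2)) = sqrt (P 1)"
      and r2: "rho x (pact (pinv (g1, g2)) (z1, z2)) = sqrt (P (-1))" by blast
    have "sqrt (P 0) = sqrt (P 1)" "sqrt (P 0) = sqrt (P (-1))" using x r0 r1 r2 by (auto simp: bisector_def)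
    hence "P 0 = P 1" "P 0 = P (-1)" by simp_all
    moreover have "P (0+1) + P (0-1) > 2 * P 0" using c by blast
    ultimately show False by simp
  qed
  have part2: "dirichlet (cyclic_group (g1, g2)) (z1, z2)
         = halfspace (z1, z2) (pact (g1, g2) (z1, z2))
           \<inter> halfspace (z1, z2) (pact (pinv (g1, g2)) (z1, z2))"
  proof (intro set_eqI iffI)
    fix q assume q: "q \<in> dirichlet (cyclic_group (g1, g2)) (z1, z2)"
    hence qH: "q \<in> H2H2" by (simp add: dirichlet_def)
    from PP[OF qH] obtain P :: "int \<Rightarrow> real" where
      r0: "rho q (z1,z2) = sqrt (P 0)" and r1: "rho q (pact (g1, g2) (z1, z2)) = sqrt (P 1)"
      and r2: "rho q (pact (pinv (g1, g2)) (z1, z2)) = sqrt (P (-1))"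
      and r3: "\<forall>n. rho (z1,z2) (pact (mat_zpow g1 n, mat_zpow g2 n) q) = sqrt (P (-n))" by blast
    have D: "\<forall>h\<in>cyclic_group (g1, g2). (\<exists>x\<in>H2H2. h x \<noteq> x) \<longrightarrow> rho (z1, z2) q \<le> rho (z1, z2) (h q)"
      using q by (simp add: dirichlet_def)
    have "rho (z1, z2) q = sqrt (P 0)" using r3[rule_format, of 0] by (simp add: mat_zpow_0 mob_id pact_def)
    note rz = this
    have h1: "pact (mat_zpow g1 1, mat_zpow g2 1) \<in> cyclic_group (g1, g2)" unfolding cyclic_group_def by force
    have h1m: "\<exists>x\<in>H2H2. pact (mat_zpow g1 1, mat_zpow g2 1) x \<noteq> x"
      using zz m1 by (auto simp: mat_zpow_1)
    have "sqrt (P 0) \<le> sqrt (P (-1))" using D h1 h1m rz r3[rule_format, of 1] by fastforce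
    hence a1: "P 0 \<le> P (-1)" by simp
    have h2: "pact (mat_zpow g1 (-1), mat_zpow g2 (-1)) \<in> cyclic_group (g1, g2)" unfolding cyclic_group_def by force
    have h2m: "\<exists>x\<in>H2H2. pact (mat_zpow g1 (-1), mat_zpow g2 (-1)) x \<noteq> x"
      using zz m2 by (auto simp: mat_zpow_m1 pinv_def)
    have "sqrt (P 0) \<le> sqrt (P (- (-1)))" using D h2 h2m rz r3[rule_format, of "-1"] by fastforce
    hence a2: "P 0 \<le> P 1" by simp
    show "q \<in> halfspace (z1, z2) (pact (g1, g2) (z1, z2)) \<inter> halfspace (z1, z2) (pact (pinv (g1, g2)) (z1, z2))"
      using qH a1 a2 r0 r1 r2 by (simp add: halfspace_def)
  next
    fix q assume q: "q \<in> halfspace (z1, z2) (pact (g1, g2) (z1, z2)) \<inter> halfspace (z1, z2) (pact (pinv (g1, g2)) (z1, z2))"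
    hence qH: "q \<in> H2H2" by (simp add: halfspace_def)
    from PP[OF qH] obtain P :: "int \<Rightarrow> real" where c: "\<forall>n. P (n+1) + P (n-1) > 2 * P n" and
      r0: "rho q (z1,z2) = sqrt (P 0)" and r1: "rho q (pact (g1, g2) (z1, z2)) = sqrt (P 1)"
      and r2: "rho q (pact (pinv (g1, g2)) (z1, z2)) = sqrt (P (-1))"
      and r3: "\<forall>n. rho (z1,z2) (pact (mat_zpow g1 n, mat_zpow g2 n) q) = sqrt (P (-n))" by blast
    have a1: "P 1 \<ge> P 0" "P (-1) \<ge> P 0" using q r0 r1 r2 by (auto simp: halfspace_def)
    have all: "P m \<ge> P 0" for m
      by (rule discrete[OF _ a1]) (use c in \<open>auto intro: less_imp_le\<close>)
    have rz: "rho (z1, z2) q = sqrt (P 0)" using r3[rule_format, of 0] by (simp add: mat_zpow_0 mob_id pact_def)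
    show "q \<in> dirichlet (cyclic_group (g1, g2)) (z1, z2)"
      unfolding dirichlet_def cyclic_group_def
    proof (intro CollectI conjI ballI impI)
      show "q \<in> H2H2" by (rule qH)
    next
      fix h assume "h \<in> {pact (mat_zpow (fst (g1, g2)) n, mat_zpow (snd (g1, g2)) n) |n. True}"
      then obtain n where hn: "h = pact (mat_zpow g1 n, mat_zpow g2 n)" by auto
      show "rho (z1, z2) q \<le> rho (z1, z2) (h q)" unfolding hn rz r3[rule_format] using all[of "-n"] by simp
    qed
  qed
  show ?thesis using part1 part2 by blast
qed

end
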